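(* Let $b\ge2$ and $e\ge2$ be integers. For every integer $h\ge1$ there are infinitely many $e$-power $b$-happy numbers of height exactly $h$.
   Context: For integers $b>1$, $e>1$ and a positive integer $n=\sum_{i=0}^{r} d_i b^i$ written in base $b$ (digits $0\le d_i\le b-1$), the $e$-power base-$b$ happy function is $S_{e,b}(n)=\sum_{i=0}^{r} d_i^e$. A positive integer $n$ is $e$-power $b$-happy if $S_{e,b}^{\ell}(n)=1$ for some $\ell\ge 1$ ($S^\ell$ the $\ell$-fold iterate). The height of $1$ is $0$, and the height of a happy number $n>1$ is the least $\ell\ge1$ with $S_{e,b}^{\ell}(n)=1$. *)

theory Defs
  imports Main
begin

fun digits :: "nat \<Rightarrow> nat \<Rightarrow> nat list" where
  "digits b n = (if b \<le> 1 \<or> n = 0 then [] else n mod b # digits b (n div b))"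

declare digits.simps [simp del]

definition happy_fun :: "nat \<Rightarrow> nat \<Rightarrow> nat \<Rightarrow> nat" where
  "happy_fun e b n = (\<Sum>d\<leftarrow>digits b n. d ^ e)"

definition is_happy :: "nat \<Rightarrow> nat \<Rightarrow> nat \<Rightarrow> bool" where
  "is_happy e b n \<longleftrightarrow> n > 0 \<and> (\<exists>l\<ge>1. (happy_fun e b ^^ l) n = 1)"

definition happy_height :: "nat \<Rightarrow> nat \<Rightarrow> nat \<Rightarrow> nat" where
  "happy_height e b n = (if n = 1 then 0 else (LEAST l. l \<ge> 1 \<and> (happy_fun e b ^^ l) n = 1))"

end

theory Submission
  imports Defs
begin

lemma digits_step:
  assumes "b \<ge> 2" "d < b" "d + b*r > 0"
  shows "digits b (d + b*r) = d # digits b r"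
  using assms by (subst digits.simps) auto

lemma hf_step:
  assumes "b \<ge> 2" "d < b" "d + b*r > 0"
  shows "happy_fun e b (d + b*r) = d^e + happy_fun e b r"
  using digits_step[OF assms] by (simp add: happy_fun_def)

fun rep :: "nat \<Rightarrow> nat \<Rightarrow> nat" where
  "rep b 0 = 0" | "rep b (Suc m) = 1 + b * rep b m"

lemma hf_rep: "b \<ge> 2 \<Longrightarrow> happy_fun e b (rep b m) = m"
proof (induction m)
  case 0 then show ?case by (simp add: happy_fun_def digits.simps)
next
  case (Suc m)
  then show ?case using hf_step[of b 1 "rep b m" e] by simp
qed

lemma rep_pos: "m > 0 \<Longrightarrow> rep b m > 0"
  by (cases m) auto

lemma hf_shift:
  assumes "b \<ge> 2" "e \<ge> 1" "r > 0"
  shows "happy_fun e b (r * b ^ t) = happy_fun e b r"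
proof (induction t)
  case 0 then show ?case by simp
next
  case (Suc t)
  have "r * b ^ Suc t = 0 + b * (r * b^t)" by simp
  moreover have "r * b ^ Suc t > 0" using assms by simp
  ultimately have "happy_fun e b (r * b ^ Suc t) = 0^e + happy_fun e b (r * b^t)"
    using hf_step[of b 0 "r * b^t" e] assms by (simp add: mult.left_commute)
  then show ?case using Suc assms by simp
qed

definition H :: "nat \<Rightarrow> nat \<Rightarrow> nat \<Rightarrow> nat \<Rightarrow> bool" where
  "H e b n k \<longleftrightarrow> (happy_fun e b ^^ k) n = 1 \<and> (\<forall>j<k. (happy_fun e b ^^ j) n \<noteq> 1)"

lemma H_step:
  assumes "H e b x k" "happy_fun e b n = x" "n \<noteq> 1"
  shows "H e b n (Suc k)"
  unfolding H_def
proof (intro conjI allI impI)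
  show "(happy_fun e b ^^ Suc k) n = 1" using assms
    by (simp add: H_def funpow_Suc_right del: funpow.simps)
  fix j assume "j < Suc k"
  then show "(happy_fun e b ^^ j) n \<noteq> 1"
  proof (cases j)
    case 0 then show ?thesis using assms by simp
  next
    case (Suc j')
    then show ?thesis using assms \<open>j < Suc k\<close>
      by (simp add: H_def funpow_Suc_right del: funpow.simps)
  qed
qed

lemma H_pos: "H e b n k \<Longrightarrow> e \<ge> 1 \<Longrightarrow> n > 0"
proof -
  assume a: "H e b n k" "e \<ge> 1"
  have z: "happy_fun e b 0 = 0" by (simp add: happy_fun_def digits.simps)
  have "(happy_fun e b ^^ j) 0 = 0" for j by (induction j) (simp_all add: z)
  then show ?thesis using a by (auto simp: H_def intro: Nat.gr0I)
qed

lemma H_height: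
  assumes "H e b n k" "k \<ge> 1" "e \<ge> 1"
  shows "is_happy e b n \<and> happy_height e b n = k"
proof -
  have n1: "n \<noteq> 1" using assms by (auto simp: H_def)
  have l: "(LEAST l. l \<ge> 1 \<and> (happy_fun e b ^^ l) n = 1) = k"
    by (rule Least_equality) (use assms in \<open>auto simp: H_def not_le[symmetric]\<close>)
  show ?thesis using assms H_pos[OF assms(1,3)] n1 l
    by (auto simp: is_happy_def happy_height_def H_def)
qed

lemma H_exists:
  assumes "b \<ge> 2" "e \<ge> 1"
  shows "\<exists>x. H e b x k"
proof (induction k)
  case 0 then show ?case by (auto simp: H_def)
next
  case (Suc k)
  then obtain x where x: "H e b x k" by blast
  have xp: "x > 0" using H_pos[OF x] assms by simp
  let ?n = "rep b x * b ^ 1"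
  have "happy_fun e b ?n = x"
    using hf_shift[OF assms rep_pos[OF xp]] hf_rep[OF assms(1)] by metis
  moreover have "?n \<noteq> 1" using assms rep_pos[OF xp, of b]
    by (metis One_nat_def le_antisym less_one mult_eq_1_iff nat_le_linear not_less_eq_eq numeral_le_one_iff power_one_right semiring_norm(69))
  ultimately show ?case using H_step[OF x] by blast
qed

theorem mainTheorem6:
  fixes b e h :: nat
  assumes "b \<ge> 2" and "e \<ge> 2" and "h \<ge> 1"
  shows "infinite {n. is_happy e b n \<and> happy_height e b n = h}"
proof -
  have e1: "e \<ge> 1" using assms by simp
  obtain k where hk: "h = Suc k" using assms by (cases h) auto
  obtain x where x: "H e b x k" using H_exists[OF assms(1) e1] by blast
  have xp: "x > 0" using H_pos[OF x e1] .
  define r where "r = rep b x"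
  have rp: "r > 0" using rep_pos[OF xp] by (simp add: r_def)
  define f where "f t = r * b ^ Suc t" for t
  have inj: "inj f"
  proof (rule injI)
    fix s t assume "f s = f t"
    then have "b ^ Suc s = b ^ Suc t" using rp by (simp add: f_def)
    then show "s = t" using assms(1) power_inject_exp[of b "Suc s" "Suc t"] by simp
  qed
  have "range f \<subseteq> {n. is_happy e b n \<and> happy_height e b n = h}"
  proof
    fix n assume "n \<in> range f"
    then obtain t where t: "n = f t" by blast
    have "happy_fun e b n = x"
      using t hf_shift[OF assms(1) e1 rp, of "Suc t"] hf_rep[OF assms(1)] by (simp add: f_def r_def)
    moreover have "n \<ge> b" using t rp assms(1) by (simp add: f_def)
    ultimately have "H e b n h" using H_step[OF x] assms(1) hk by auto
    then show "n \<in> {n. is_happy e b n \<and> happy_height e b n = h}"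
      using H_height assms(3) e1 by blast
  qed
  moreover have "infinite (range f)" using inj by (simp add: finite_image_iff)
  ultimately show ?thesis using finite_subset by blast
qed

end
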